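(* Let $r\ge 0$ and $\ell\ge 1$ be integers, let $G$ be a graph, and let $H$ be an $r$-shallow minor of $G\boxtimes K_\ell$. Then for every integer $s\ge 1$, $$\mathrm{scol}_s(H)\le \ell\,\mathrm{scol}_{2rs+2r+s}(G)\quad\text{and}\quad \mathrm{wcol}_s(H)\le \ell\,\mathrm{wcol}_{2rs+2r+s}(G).$$
   Context: Graphs are finite, simple, undirected. The strong product $G\boxtimes K_\ell$ has vertex set $V(G)\times[\ell]$ with distinct $(a,i),(b,j)$ adjacent iff $a=b$ or $ab\in E(G)$. A model of $H$ in $G'$ assigns to each $v\in V(H)$ a connected subgraph $\mu(v)$ of $G'$, pairwise vertex-disjoint, such that each edge $vw\in E(H)$ has an edge of $G'$ between $\mu(v)$ and $\mu(w)$; $H$ is an $r$-shallow minor of $G'$ if some model has all $\mu(v)$ of radius at most $r$. For a graph $G$, a total order $\preceq$ of $V(G)$, a vertex $v$ and an integer $s\ge1$: $R(G,\preceq,v,s)$ is the set of vertices $w$ for which there is a path $v=w_0,w_1,\dots,w_{s'}=w$ with $0\le s'\le s$, $w\preceq v$, and $v\prec w_i$ for all $i\in[s'-1]$; $Q(G,\preceq,v,s)$ is the set of vertices $w$ for which there is such a path with $w\preceq v$ and $w\prec w_i$ for all $i\in[s'-1]$. The $s$-strong colouring number $\mathrm{scol}_s(G)$ (resp. $s$-weak colouring number $\mathrm{wcol}_s(G)$) is the minimum over total orders $\preceq$ of $\max_v|R(G,\preceq,v,s)|$ (resp. $\max_v|Q(G,\preceq,v,s)|$). *)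

theory Defs
  imports Main
begin

type_synonym 'a ugraph = "'a set \<times> 'a set set"

abbreviation verts :: "'a ugraph \<Rightarrow> 'a set" where "verts G \<equiv> fst G"
abbreviation edges :: "'a ugraph \<Rightarrow> 'a set set" where "edges G \<equiv> snd G"

definition graph :: "'a ugraph \<Rightarrow> bool" where
  "graph G \<longleftrightarrow> finite (verts G) \<and>
     (\<forall>e\<in>edges G. \<exists>u v. u \<noteq> v \<and> u \<in> verts G \<and> v \<in> verts G \<and> e = {u, v})"

definition is_walk :: "'a ugraph \<Rightarrow> 'a list \<Rightarrow> bool" where
  "is_walk G ws \<longleftrightarrow> ws \<noteq> [] \<and> set ws \<subseteq> verts G \<and>
     (\<forall>i. Suc i < length ws \<longrightarrow> {ws ! i, ws ! Suc i} \<in> edges G)"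

definition is_path :: "'a ugraph \<Rightarrow> 'a list \<Rightarrow> bool" where
  "is_path G ws \<longleftrightarrow> is_walk G ws \<and> distinct ws"

definition subgraph :: "'a ugraph \<Rightarrow> 'a ugraph \<Rightarrow> bool" where
  "subgraph S G \<longleftrightarrow> graph S \<and> verts S \<subseteq> verts G \<and> edges S \<subseteq> edges G"

definition connected_graph :: "'a ugraph \<Rightarrow> bool" where
  "connected_graph G \<longleftrightarrow> verts G \<noteq> {} \<and>
     (\<forall>x\<in>verts G. \<forall>y\<in>verts G. \<exists>ws. is_walk G ws \<and> hd ws = x \<and> last ws = y)"

definition radius_le :: "'a ugraph \<Rightarrow> nat \<Rightarrow> bool" where
  "radius_le G r \<longleftrightarrow> (\<exists>c\<in>verts G. \<forall>x\<in>verts G.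
      \<exists>ws. is_walk G ws \<and> hd ws = c \<and> last ws = x \<and> length ws \<le> r + 1)"

definition strong_product_K :: "'a ugraph \<Rightarrow> nat \<Rightarrow> ('a \<times> nat) ugraph" where
  "strong_product_K G l =
    (verts G \<times> {1..l},
     {{(a, i), (b, j)} | a i b j. (a, i) \<noteq> (b, j) \<and> a \<in> verts G \<and> b \<in> verts G \<and>
        i \<in> {1..l} \<and> j \<in> {1..l} \<and> (a = b \<or> {a, b} \<in> edges G)})"

definition shallow_minor :: "nat \<Rightarrow> 'b ugraph \<Rightarrow> 'c ugraph \<Rightarrow> bool" where
  "shallow_minor r H G' \<longleftrightarrow> (\<exists>\<mu> :: 'b \<Rightarrow> 'c ugraph.
     (\<forall>v\<in>verts H. subgraph (\<mu> v) G' \<and> connected_graph (\<mu> v) \<and> radius_le (\<mu> v) r) \<and>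
     (\<forall>v\<in>verts H. \<forall>w\<in>verts H. v \<noteq> w \<longrightarrow> verts (\<mu> v) \<inter> verts (\<mu> w) = {}) \<and>
     (\<forall>v\<in>verts H. \<forall>w\<in>verts H. {v, w} \<in> edges H \<longrightarrow>
        (\<exists>x\<in>verts (\<mu> v). \<exists>y\<in>verts (\<mu> w). {x, y} \<in> edges G')))"

text \<open>Orders are relations ord with (x,y) in ord meaning x \<preceq> y.\<close>
definition sreach :: "'a ugraph \<Rightarrow> 'a rel \<Rightarrow> 'a \<Rightarrow> nat \<Rightarrow> 'a set" where
  "sreach G ord v s = {w. \<exists>ws. is_path G ws \<and> hd ws = v \<and> last ws = w \<and>
      length ws \<le> s + 1 \<and> (w, v) \<in> ord \<and>
      (\<forall>i. 0 < i \<and> i < length ws - 1 \<longrightarrow> (v, ws ! i) \<in> ord \<and> ws ! i \<noteq> v)}"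

definition wreach :: "'a ugraph \<Rightarrow> 'a rel \<Rightarrow> 'a \<Rightarrow> nat \<Rightarrow> 'a set" where
  "wreach G ord v s = {w. \<exists>ws. is_path G ws \<and> hd ws = v \<and> last ws = w \<and>
      length ws \<le> s + 1 \<and> (w, v) \<in> ord \<and>
      (\<forall>i. 0 < i \<and> i < length ws - 1 \<longrightarrow> (w, ws ! i) \<in> ord \<and> ws ! i \<noteq> w)}"

definition scol :: "nat \<Rightarrow> 'a ugraph \<Rightarrow> nat" where
  "scol s G = (LEAST k. \<exists>ord. linear_order_on (verts G) ord \<and>
      (\<forall>v\<in>verts G. card (sreach G ord v s) \<le> k))"

definition wcol :: "nat \<Rightarrow> 'a ugraph \<Rightarrow> nat" where
  "wcol s G = (LEAST k. \<exists>ord. linear_order_on (verts G) ord \<and>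
      (\<forall>v\<in>verts G. card (wreach G ord v s) \<le> k))"

end

theory Submission
  imports Defs
begin


definition lw :: "'a ugraph \<Rightarrow> 'a list \<Rightarrow> bool" where
  "lw G xs \<longleftrightarrow> xs \<noteq> [] \<and> set xs \<subseteq> verts G \<and> successively (\<lambda>a b. a = b \<or> {a,b} \<in> edges G) xs"

lemma is_walk_succ: "is_walk G ws \<longleftrightarrow> ws \<noteq> [] \<and> set ws \<subseteq> verts G \<and> successively (\<lambda>a b. {a,b} \<in> edges G) ws"
  by (simp add: is_walk_def successively_conv_nth)

lemma lw_append: "lw G xs \<Longrightarrow> lw G ys \<Longrightarrow> (last xs = hd ys \<or> {last xs, hd ys} \<in> edges G) \<Longrightarrow> lw G (xs @ ys)"
  unfolding lw_def by (auto simp: successively_append_iff)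

lemma lw_rev: "lw G xs \<Longrightarrow> lw G (rev xs)"
  unfolding lw_def by (auto elim!: successively_mono simp: insert_commute)

lemma lw_Cons: "lw G (x # ys) \<Longrightarrow> ys \<noteq> [] \<Longrightarrow> lw G ys \<and> (x = hd ys \<or> {x, hd ys} \<in> edges G)"
  unfolding lw_def by (auto simp: successively_Cons)

lemma succ_distinct: "successively (\<lambda>a b. a = b \<or> P a b) xs \<Longrightarrow> distinct xs \<Longrightarrow> successively P xs"
  by (induction "\<lambda>a b. a = b \<or> P a b" xs rule: successively.induct) auto

lemma lw_path: "lw G xs \<Longrightarrow> \<exists>ps. is_path G ps \<and> hd ps = hd xs \<and> last ps = last xs \<and> length ps \<le> length xs \<and> set ps \<subseteq> set xs"
proof (induction "length xs" arbitrary: xs rule: less_induct)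
  case less
  show ?case
  proof (cases "distinct xs")
    case True
    then have "is_path G xs" using less.prems
      by (auto simp: is_path_def is_walk_succ lw_def intro: succ_distinct)
    then show ?thesis by blast
  next
    case False
    then obtain as bs cs y where xs: "xs = as @ [y] @ bs @ [y] @ cs" using not_distinct_decomp by blast
    have l': "lw G (as @ [y] @ cs)" using less.prems unfolding xs lw_def
      by (auto simp: successively_append_iff successively_Cons)
    have "length (as @ [y] @ cs) < length xs" using xs by simp
    from less.hyps[OF this l'] obtain ps where ps: "is_path G ps \<and> hd ps = hd (as @ [y] @ cs) \<and> last ps = last (as @ [y] @ cs)
       \<and> length ps \<le> length (as @ [y] @ cs) \<and> set ps \<subseteq> set (as @ [y] @ cs)" by blast
    have "hd (as @ [y] @ cs) = hd xs" "last (as @ [y] @ cs) = last xs"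
      unfolding xs by (cases as; simp) (cases cs; simp)
    then show ?thesis using ps xs by (intro exI[of _ ps]) auto
  qed
qed

lemma prod_edge: "{p,q} \<in> edges (strong_product_K G l) \<Longrightarrow> fst p = fst q \<or> {fst p, fst q} \<in> edges G"
  unfolding strong_product_K_def by (auto simp: doubleton_eq_iff insert_commute)

lemma prod_vert: "p \<in> verts (strong_product_K G l) \<Longrightarrow> fst p \<in> verts G \<and> snd p \<in> {1..l}"
  unfolding strong_product_K_def by auto

lemma walk_proj: assumes "subgraph S (strong_product_K G l)" "is_walk S ws" shows "lw G (map fst ws)"
proof -
  have V: "verts S \<subseteq> verts (strong_product_K G l)" and E: "edges S \<subseteq> edges (strong_product_K G l)"
    using assms(1) by (simp_all add: subgraph_def)
  have ws: "ws \<noteq> []" "set ws \<subseteq> verts S" "successively (\<lambda>a b. {a,b} \<in> edges S) ws"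
    using assms(2) unfolding is_walk_succ by simp_all
  have "fst p \<in> verts G" if "p \<in> set ws" for p using ws(2) V prod_vert that by blast
  then have "set (map fst ws) \<subseteq> verts G" by auto
  moreover have "successively (\<lambda>a b. a = b \<or> {a,b} \<in> edges G) (map fst ws)"
    unfolding successively_map using ws(3) by (rule successively_mono) (meson E prod_edge subsetD)
  ultimately show ?thesis using ws(1) unfolding lw_def by simp
qed

lemma lin_inj: fixes f :: "'a \<Rightarrow> nat" assumes "inj_on f A"
  shows "linear_order_on A {(a,b). a \<in> A \<and> b \<in> A \<and> f a \<le> f b}"
  using assms unfolding linear_order_on_def partial_order_on_def preorder_on_def refl_on_def trans_def
    antisym_def total_on_def inj_on_def by auto

lemma card_fibres: assumes "finite B" "\<forall>a\<in>A. f a \<in> B" "\<forall>b\<in>B. card {a\<in>A. f a = b} \<le> k"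
  shows "card A \<le> k * card B"
proof -
  have "A = (\<Union>b\<in>B. {a\<in>A. f a = b})" using assms(2) by auto
  then have "card A \<le> (\<Sum>b\<in>B. card {a\<in>A. f a = b})" using card_UN_le[OF assms(1)] by metis
  also have "\<dots> \<le> card B * k" using sum_bounded_above[of B "\<lambda>b. card {a\<in>A. f a = b}" k] assms(3) by simp
  finally show ?thesis by (simp add: mult.commute)
qed



locale mdl =
  fixes G :: "'a ugraph" and H :: "'b ugraph" and r l :: nat
    and mu :: "'b \<Rightarrow> ('a \<times> nat) ugraph" and ord :: "'a rel"
  assumes graphG: "graph G" and graphH: "graph H"
  and mu: "\<And>v. v \<in> verts H \<Longrightarrow> subgraph (mu v) (strong_product_K G l) \<and> connected_graph (mu v) \<and> radius_le (mu v) r"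
  and disj: "\<And>v w. v \<in> verts H \<Longrightarrow> w \<in> verts H \<Longrightarrow> v \<noteq> w \<Longrightarrow> verts (mu v) \<inter> verts (mu w) = {}"
  and adjm: "\<And>v w. v \<in> verts H \<Longrightarrow> w \<in> verts H \<Longrightarrow> {v,w} \<in> edges H \<Longrightarrow>
      \<exists>x\<in>verts (mu v). \<exists>y\<in>verts (mu w). {x,y} \<in> edges (strong_product_K G l)"
  and lin: "linear_order_on (verts G) ord"
begin

definition Pm where "Pm u = fst ` verts (mu u)"

lemma finG: "finite (verts G)" using graphG by (simp add: graph_def)
lemma finH: "finite (verts H)" using graphH by (simp add: graph_def)

lemma mu_sub: "v \<in> verts H \<Longrightarrow> verts (mu v) \<subseteq> verts (strong_product_K G l)"
  using mu by (simp add: subgraph_def)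

lemma Pm_sub: "u \<in> verts H \<Longrightarrow> Pm u \<subseteq> verts G"
  unfolding Pm_def using mu_sub prod_vert by blast

lemma Pm_ne: "u \<in> verts H \<Longrightarrow> Pm u \<noteq> {}"
  using mu[of u] unfolding Pm_def by (simp add: connected_graph_def)

lemma Pm_fin: "u \<in> verts H \<Longrightarrow> finite (Pm u)"
  using Pm_sub finG finite_subset by blast

lemma inner: assumes "u \<in> verts H" "p \<in> Pm u" "q \<in> Pm u"
  shows "\<exists>W. lw G W \<and> hd W = p \<and> last W = q \<and> length W \<le> 2*r+1 \<and> set W \<subseteq> Pm u"
proof -
  have sg: "subgraph (mu u) (strong_product_K G l)" and rad: "radius_le (mu u) r" using mu[OF assms(1)] by auto
  obtain c where c: "c \<in> verts (mu u)" and cw: "\<forall>x\<in>verts (mu u). \<exists>ws. is_walk (mu u) ws \<and> hd ws = c \<and> last ws = x \<and> length ws \<le> r+1"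
    using rad unfolding radius_le_def by blast
  obtain p' q' where p': "p' \<in> verts (mu u)" "p = fst p'" and q': "q' \<in> verts (mu u)" "q = fst q'"
    using assms(2,3) unfolding Pm_def by blast
  obtain ws1 where w1: "is_walk (mu u) ws1" "hd ws1 = c" "last ws1 = p'" "length ws1 \<le> r+1" using cw p' by blast
  obtain ws2 where w2: "is_walk (mu u) ws2" "hd ws2 = c" "last ws2 = q'" "length ws2 \<le> r+1" using cw q' by blast
  define A where "A = map fst ws1"
  define B where "B = map fst ws2"
  have s1: "ws1 \<noteq> []" "set ws1 \<subseteq> verts (mu u)" using w1(1) unfolding is_walk_def by simp_all
  have s2: "ws2 \<noteq> []" "set ws2 \<subseteq> verts (mu u)" using w2(1) unfolding is_walk_def by simp_all
  have lA: "lw G A" "A \<noteq> []" "hd A = fst c" "last A = p" "length A \<le> r+1" "set A \<subseteq> Pm u"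
    using walk_proj[OF sg w1(1)] w1 p' s1 unfolding A_def Pm_def by (auto simp: hd_map last_map)
  have lB: "lw G B" "B \<noteq> []" "hd B = fst c" "last B = q" "length B \<le> r+1" "set B \<subseteq> Pm u"
    using walk_proj[OF sg w2(1)] w2 q' s2 unfolding B_def Pm_def by (auto simp: hd_map last_map)
  have Bc: "B = fst c # tl B" using lB(2,3) by (cases B) auto
  show ?thesis
  proof (cases "tl B = []")
    case True
    then have "q = fst c" using Bc lB(4) by (metis last_ConsL)
    then show ?thesis using lw_rev[OF lA(1)] lA
      by (intro exI[of _ "rev A"]) (auto simp: hd_rev last_rev)
  next
    case False
    from lw_Cons[of G "fst c" "tl B"] lB(1) Bc False
    have t: "lw G (tl B)" "fst c = hd (tl B) \<or> {fst c, hd (tl B)} \<in> edges G" by auto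
    have l: "lw G (rev A @ tl B)" using lw_append[OF lw_rev[OF lA(1)] t(1)] t(2) lA(2,3)
      by (simp add: last_rev)
    have set_tl_sub: "set (tl B) \<subseteq> set B" by (cases B) auto
    have "hd (rev A @ tl B) = p" using lA(2,4) by (simp add: hd_rev)
    moreover have "last (rev A @ tl B) = q" using False lB(4) Bc by (metis last_ConsR last_append)
    moreover have "length (rev A @ tl B) \<le> 2*r+1" using lA(5) lB(5) by simp
    moreover have "set (rev A @ tl B) \<subseteq> Pm u" using lA(6) lB(6) set_tl_sub by auto
    ultimately show ?thesis using l by blast
  qed
qed

lemma chain: "is_walk H ws \<Longrightarrow> p \<in> Pm (hd ws) \<Longrightarrow> q \<in> Pm (last ws) \<Longrightarrow>
  \<exists>W. lw G W \<and> hd W = p \<and> last W = q \<and> length W \<le> length ws * (2*r+1) \<and> set W \<subseteq> (\<Union>u\<in>set ws. Pm u)"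
proof (induction ws arbitrary: p)
  case Nil thus ?case by (simp add: is_walk_def)
next
  case (Cons u ws)
  have uH: "u \<in> verts H" using Cons.prems(1) by (simp add: is_walk_def)
  show ?case
  proof (cases "ws = []")
    case True
    then obtain W where "lw G W \<and> hd W = p \<and> last W = q \<and> length W \<le> 2*r+1 \<and> set W \<subseteq> Pm u"
      using inner[OF uH] Cons.prems by fastforce
    then show ?thesis using True by (intro exI[of _ W]) auto
  next
    case False
    have wsw: "is_walk H ws" and e: "{u, hd ws} \<in> edges H" using Cons.prems(1) False
      unfolding is_walk_succ by (auto simp: successively_Cons)
    have hH: "hd ws \<in> verts H" using wsw False unfolding is_walk_def by auto
    obtain a b where a: "a \<in> verts (mu u)" and b: "b \<in> verts (mu (hd ws))"
      and ab: "{a,b} \<in> edges (strong_product_K G l)" using adjm[OF uH hH e] by blast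
    have pu: "p \<in> Pm u" "fst a \<in> Pm u" using Cons.prems(2) a unfolding Pm_def by auto
    obtain W1 where W1: "lw G W1" "hd W1 = p" "last W1 = fst a" "length W1 \<le> 2*r+1" "set W1 \<subseteq> Pm u"
      using inner[OF uH pu] by blast
    have "fst b \<in> Pm (hd ws)" "q \<in> Pm (last ws)" using b Cons.prems(3) False unfolding Pm_def by auto
    then obtain W2 where W2: "lw G W2" "hd W2 = fst b" "last W2 = q" "length W2 \<le> length ws * (2*r+1)"
       "set W2 \<subseteq> (\<Union>u\<in>set ws. Pm u)"
      using Cons.IH[OF wsw] by blast
    have ne: "W1 \<noteq> []" "W2 \<noteq> []" using W1(1) W2(1) unfolding lw_def by auto
    have "lw G (W1 @ W2)" using lw_append[OF W1(1) W2(1)] W1(3) W2(2) prod_edge[OF ab] by auto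
    moreover have "hd (W1 @ W2) = p" "last (W1 @ W2) = q" using ne W1(2) W2(3) by auto
    moreover have "length (W1 @ W2) \<le> length (u # ws) * (2*r+1)" using W1(4) W2(4) by simp
    moreover have "set (W1 @ W2) \<subseteq> (\<Union>u\<in>set (u#ws). Pm u)" using W1(5) W2(5) by auto
    ultimately show ?thesis by blast
  qed
qed

lemma ordG: "trans ord" "antisym ord" "\<And>a. a\<in>verts G \<Longrightarrow> (a,a)\<in>ord"
   "\<And>a b. a\<in>verts G \<Longrightarrow> b\<in>verts G \<Longrightarrow> a\<noteq>b \<Longrightarrow> (a,b)\<in>ord \<or> (b,a)\<in>ord"
  using lin unfolding linear_order_on_def partial_order_on_def preorder_on_def refl_on_def total_on_def by auto

definition gG where "gG a = card {c \<in> verts G. (c,a) \<in> ord}"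

lemma g_ord: assumes "a \<in> verts G" "b \<in> verts G" "gG a \<le> gG b" shows "(a,b) \<in> ord"
proof (rule ccontr)
  assume na: "(a,b) \<notin> ord"
  then have "a \<noteq> b" using ordG(3) assms by auto
  then have ba: "(b,a) \<in> ord" using ordG(4) assms na by blast
  have sub: "{c \<in> verts G. (c,b) \<in> ord} \<subseteq> {c \<in> verts G. (c,a) \<in> ord}"
    using ba ordG(1) unfolding trans_def by blast
  have "a \<in> {c \<in> verts G. (c,a) \<in> ord}" "a \<notin> {c \<in> verts G. (c,b) \<in> ord}" using assms ordG(3) na by auto
  then have "{c \<in> verts G. (c,b) \<in> ord} \<subset> {c \<in> verts G. (c,a) \<in> ord}" using sub by blast
  then have "gG b < gG a" unfolding gG_def by (rule psubset_card_mono[rotated]) (simp add: finG)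
  then show False using assms(3) by simp
qed

definition xm where "xm u = (SOME a. a \<in> Pm u \<and> gG a = Min (gG ` Pm u))"

lemma xm_spec: assumes "u \<in> verts H" shows "xm u \<in> Pm u \<and> gG (xm u) = Min (gG ` Pm u)"
proof -
  have "Min (gG ` Pm u) \<in> gG ` Pm u" using Pm_fin Pm_ne assms by simp
  then have ex: "\<exists>a. a \<in> Pm u \<and> gG a = Min (gG ` Pm u)" by auto
  then show ?thesis unfolding xm_def by (rule someI_ex)
qed

lemma xm_in: "u \<in> verts H \<Longrightarrow> xm u \<in> Pm u" using xm_spec by blast
lemma xm_G: "u \<in> verts H \<Longrightarrow> xm u \<in> verts G" using xm_in Pm_sub by blast

lemma xm_min: assumes "u \<in> verts H" "p \<in> Pm u" shows "(xm u, p) \<in> ord"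
proof -
  have "gG (xm u) \<le> gG p" using xm_spec[OF assms(1)] Pm_fin[OF assms(1)] assms(2) by simp
  then show ?thesis using g_ord xm_G[OF assms(1)] Pm_sub[OF assms(1)] assms(2) by blast
qed

lemma ordH_exists: "\<exists>oH. linear_order_on (verts H) oH \<and>
   (\<forall>u\<in>verts H. \<forall>w\<in>verts H. (u,w) \<in> oH \<longrightarrow> (xm u, xm w) \<in> ord)"
proof -
  obtain h :: "'b \<Rightarrow> nat" and n where h: "h ` verts H = {i. i < n}" "inj_on h (verts H)"
    using finite_imp_inj_to_nat_seg[OF finH] by blast
  define k where "k u = gG (xm u) * n + h u" for u
  have mono: "gG (xm u) \<le> gG (xm w)" if "u \<in> verts H" "w \<in> verts H" "k u \<le> k w" for u w
  proof (rule ccontr)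
    assume "\<not> ?thesis"
    then have "(gG (xm w) + 1) * n \<le> gG (xm u) * n" by (intro mult_right_mono) auto
    moreover have "h w < n" using h(1) that(2) by auto
    ultimately have "k w < k u" unfolding k_def by (simp add: algebra_simps)
    then show False using that(3) by simp
  qed
  have inj: "inj_on k (verts H)"
  proof (rule inj_onI)
    fix u w assume uw: "u \<in> verts H" "w \<in> verts H" "k u = k w"
    then have "gG (xm u) \<le> gG (xm w)" "gG (xm w) \<le> gG (xm u)" using mono[OF uw(1,2)] mono[OF uw(2,1)] uw(3) by simp_all
    then have "gG (xm u) = gG (xm w)" by simp
    then have "h u = h w" using uw(3) unfolding k_def by simp
    then show "u = w" using h(2) uw(1,2) by (meson inj_onD)
  qed
  have "(xm u, xm w) \<in> ord" if "u \<in> verts H" "w \<in> verts H" "k u \<le> k w" for u w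
    using g_ord[OF xm_G xm_G mono] that by blast
  then show ?thesis using lin_inj[OF inj] by (intro exI[of _ "{(a,b). a \<in> verts H \<and> b \<in> verts H \<and> k a \<le> k b}"]) auto
qed

lemma fibre: "card {w \<in> verts H. y \<in> Pm w} \<le> l"
proof -
  define S where "S = {w \<in> verts H. y \<in> Pm w}"
  define f where "f w = (SOME i. (y,i) \<in> verts (mu w))" for w
  have fw: "(y, f w) \<in> verts (mu w)" if "w \<in> S" for w
  proof -
    have "y \<in> fst ` verts (mu w)" using that unfolding S_def Pm_def by simp
    then obtain p where p: "p \<in> verts (mu w)" "y = fst p" by blast
    then have "\<exists>i. (y,i) \<in> verts (mu w)" by (intro exI[of _ "snd p"]) simp
    then show ?thesis unfolding f_def by (rule someI_ex)
  qed
  have "inj_on f S"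
  proof (rule inj_onI)
    fix u w assume "u \<in> S" "w \<in> S" "f u = f w"
    then have "(y, f u) \<in> verts (mu u) \<inter> verts (mu w)" using fw[of u] fw[of w] by auto
    then show "u = w" using disj \<open>u \<in> S\<close> \<open>w \<in> S\<close> unfolding S_def by blast
  qed
  moreover have "f ` S \<subseteq> {1..l}"
  proof
    fix i assume "i \<in> f ` S"
    then obtain w where "w \<in> S" "i = f w" by blast
    then have "(y, i) \<in> verts (mu w)" using fw by simp
    then have "(y, i) \<in> verts (strong_product_K G l)" using mu_sub \<open>w \<in> S\<close> unfolding S_def by blast
    then show "i \<in> {1..l}" using prod_vert[of "(y,i)"] by simp
  qed
  ultimately have "card S \<le> card {1..l}" by (intro card_inj_on_le) auto
  then show ?thesis unfolding S_def by simp
qed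

lemma count: assumes "A \<subseteq> verts H" "finite B" "\<forall>w\<in>A. \<exists>y\<in>Pm w. y \<in> B"
  shows "card A \<le> l * card B"
proof -
  define phi where "phi w = (SOME y. y \<in> Pm w \<and> y \<in> B)" for w
  have ph: "phi w \<in> Pm w \<and> phi w \<in> B" if "w \<in> A" for w
  proof -
    from assms(3) that have "\<exists>y. y \<in> Pm w \<and> y \<in> B" by blast
    then show ?thesis unfolding phi_def by (rule someI_ex)
  qed
  have fb: "card {a \<in> A. phi a = b} \<le> l" for b
  proof -
    have "{a \<in> A. phi a = b} \<subseteq> {w \<in> verts H. b \<in> Pm w}" using ph assms(1) by blast
    then have "card {a \<in> A. phi a = b} \<le> card {w \<in> verts H. b \<in> Pm w}" by (rule card_mono[rotated]) (use finH in auto)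
    then show ?thesis using fibre[of b] by linarith
  qed
  have "\<forall>a\<in>A. phi a \<in> B" using ph by blast
  moreover have "\<forall>b\<in>B. card {a \<in> A. phi a = b} \<le> l" using fb by blast
  ultimately show ?thesis by (rule card_fibres[OF assms(2)])
qed

end



lemma sreach_sub: "sreach G ord v s \<subseteq> verts G"
proof
  fix w assume "w \<in> sreach G ord v s"
  then obtain ws where "is_path G ws" "last ws = w" unfolding sreach_def by blast
  then show "w \<in> verts G" unfolding is_path_def is_walk_def by (metis last_in_set subsetD)
qed

lemma wreach_sub: "wreach G ord v s \<subseteq> verts G"
proof
  fix w assume "w \<in> wreach G ord v s"
  then obtain ws where "is_path G ws" "last ws = w" unfolding wreach_def by blast
  then show "w \<in> verts G" unfolding is_path_def is_walk_def by (metis last_in_set subsetD)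
qed

locale mdl2 = mdl +
  fixes oH :: "'b rel"
  assumes monoH: "\<And>u w. u \<in> verts H \<Longrightarrow> w \<in> verts H \<Longrightarrow> (u,w) \<in> oH \<Longrightarrow> (xm u, xm w) \<in> ord"
begin

lemma walk_setup:
  assumes v: "v \<in> verts H" and ws: "is_path H ws" "hd ws = v" "last ws = w" "length ws \<le> s+1"
  shows "w \<in> verts H" "\<exists>W. lw G W \<and> hd W = xm v \<and> last W = xm w \<and> length W \<le> 2*r*s+2*r+s+1 \<and>
     set W \<subseteq> (\<Union>u\<in>set ws. Pm u)"
proof -
  have wsw: "is_walk H ws" using ws(1) unfolding is_path_def by simp
  have ne: "ws \<noteq> []" "set ws \<subseteq> verts H" using wsw unfolding is_walk_def by simp_all
  show wH: "w \<in> verts H" using ne ws(3) by (metis last_in_set subsetD)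
  obtain W where W: "lw G W" "hd W = xm v" "last W = xm w" "length W \<le> length ws * (2*r+1)" "set W \<subseteq> (\<Union>u\<in>set ws. Pm u)"
    using chain[OF wsw] xm_in[OF v] xm_in[OF wH] ws(2,3) by blast
  have "length ws * (2*r+1) \<le> (s+1)*(2*r+1)" using ws(4) by (rule mult_right_mono) simp
  then have "length W \<le> 2*r*s+2*r+s+1" using W(4) by (simp add: algebra_simps)
  then show "\<exists>W. lw G W \<and> hd W = xm v \<and> last W = xm w \<and> length W \<le> 2*r*s+2*r+s+1 \<and>
     set W \<subseteq> (\<Union>u\<in>set ws. Pm u)" using W by blast
qed

lemma pos_cases:
  assumes "u \<in> set ws" "ws \<noteq> []"
  obtains "u = hd ws" | "u = last ws" | i where "0 < i" "i < length ws - 1" "ws ! i = u"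
proof -
  obtain i where i: "i < length ws" "ws ! i = u" using assms(1) by (auto simp: in_set_conv_nth)
  consider "i = 0" | "i = length ws - 1" | "0 < i \<and> i < length ws - 1" using i by linarith
  then show ?thesis
  proof cases
    case 1 then show ?thesis using that i assms(2) by (simp add: hd_conv_nth)
  next
    case 2 then show ?thesis using that i assms(2) by (simp add: last_conv_nth)
  next
    case 3 then show ?thesis using that i by blast
  qed
qed

lemma strong_map: assumes v: "v \<in> verts H" and w: "w \<in> sreach H oH v s"
  shows "\<exists>y \<in> Pm w. y \<in> sreach G ord (xm v) (2*r*s+2*r+s)"
proof -
  let ?t = "2*r*s+2*r+s"
  from w obtain ws where ws: "is_path H ws" "hd ws = v" "last ws = w" "length ws \<le> s+1" "(w,v) \<in> oH"
    and int: "\<forall>i. 0 < i \<and> i < length ws - 1 \<longrightarrow> (v, ws!i) \<in> oH \<and> ws!i \<noteq> v"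
    unfolding sreach_def by blast
  have wH: "w \<in> verts H" using walk_setup(1)[OF v ws(1-4)] .
  obtain W where W: "lw G W" "hd W = xm v" "last W = xm w" "length W \<le> ?t+1" "set W \<subseteq> (\<Union>u\<in>set ws. Pm u)"
    using walk_setup(2)[OF v ws(1-4)] by blast
  have wsH: "ws \<noteq> []" "set ws \<subseteq> verts H" using ws(1) unfolding is_path_def is_walk_def by simp_all
  have key: "(xm v, y) \<in> ord \<or> y \<in> Pm w" if yin: "y \<in> set W" for y
  proof -
    obtain u where u: "u \<in> set ws" "y \<in> Pm u" using W(5) yin by blast
    have uH: "u \<in> verts H" using u wsH by blast
    from u(1) wsH(1) show ?thesis
    proof (cases rule: pos_cases)
      case 1 then show ?thesis using xm_min[OF v] u ws(2) by blast
    next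
      case 2 then show ?thesis using u ws(3) by blast
    next
      case (3 i)
      then have "(v,u) \<in> oH" using int by blast
      then have "(xm v, xm u) \<in> ord" using monoH v uH by blast
      moreover have "(xm u, y) \<in> ord" using xm_min uH u by blast
      ultimately show ?thesis using ordG(1) unfolding trans_def by blast
    qed
  qed
  obtain ps where ps: "is_path G ps" "hd ps = xm v" "last ps = xm w" "length ps \<le> length W" "set ps \<subseteq> set W"
    using lw_path[OF W(1)] W(2,3) by auto
  have psG: "ps \<noteq> []" "set ps \<subseteq> verts G" "distinct ps" using ps(1) unfolding is_path_def is_walk_def by simp_all
  have xvG: "xm v \<in> verts G" using xm_G[OF v] .
  have wv: "(xm w, xm v) \<in> ord" using monoH wH v ws(5) by blast
  obtain rest where psr: "ps = xm v # rest" using psG(1) ps(2) by (cases ps) auto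
  show ?thesis
  proof (cases "rest = []")
    case True
    then have ps1: "ps = [xm v]" using psr by simp
    then have "xm v = xm w" using ps(3) by simp
    then have "xm v \<in> Pm w" using xm_in[OF wH] by simp
    moreover have "xm v \<in> sreach G ord (xm v) ?t" unfolding sreach_def
      using ps(1) ps1 ordG(3)[OF xvG] by (intro CollectI exI[of _ "[xm v]"]) auto
    ultimately show ?thesis by blast
  next
    case False
    have "last rest = xm w" using psr ps(3) False by simp
    then have "\<exists>y\<in>set rest. (y, xm v) \<in> ord" using wv False last_in_set by metis
    then obtain ys y zs where sp: "rest = ys @ y # zs" "(y, xm v) \<in> ord" "\<forall>z\<in>set ys. (z, xm v) \<notin> ord"
      using split_list_first_prop[of rest "\<lambda>y. (y, xm v) \<in> ord"] by blast
    define qs where "qs = xm v # ys @ [y]"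
    have psq: "ps = qs @ zs" using psr sp(1) unfolding qs_def by simp
    have qne: "qs \<noteq> []" by (simp add: qs_def)
    have "is_path G (qs @ zs)" using ps(1) psq by simp
    then have qsp: "is_path G qs" using qne unfolding is_path_def is_walk_succ successively_append_iff by auto
    have psf: "ps = xm v # ys @ y # zs" using psr sp(1) by simp
    have yne: "y \<noteq> xm v" using psG(3) psf by auto
    have yW: "y \<in> set W" using ps(5) psf by auto
    have "(xm v, y) \<notin> ord" using sp(2) yne ordG(2) unfolding antisym_def by blast
    then have "y \<in> Pm w" using key yW by blast
    moreover have "y \<in> sreach G ord (xm v) ?t"
      unfolding sreach_def
    proof (intro CollectI exI[of _ qs] conjI allI impI)
      show "is_path G qs" by (rule qsp)
      show "hd qs = xm v" "last qs = y" unfolding qs_def by simp_all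
      have "length qs \<le> length ps" using psq by simp
      then show "length qs \<le> ?t + 1" using ps(4) W(4) by linarith
      show "(y, xm v) \<in> ord" by (rule sp(2))
      fix i assume i: "0 < i \<and> i < length qs - 1"
      have lq: "length qs = length ys + 2" by (simp add: qs_def)
      have i1: "i - 1 < length ys" using i lq by linarith
      have "qs ! i = (ys @ [y]) ! (i - 1)" unfolding qs_def using i by (simp add: nth_Cons_pos)
      also have "\<dots> = ys ! (i - 1)" using i1 by (simp add: nth_append)
      finally have inys: "qs ! i \<in> set ys" using i1 nth_mem by metis
      have "set ys \<subseteq> set ps" using psf by auto
      then have qG: "qs ! i \<in> verts G" using inys psG(2) by blast
      have nq: "(qs ! i, xm v) \<notin> ord" using sp(3) inys by blast
      then show ne: "qs ! i \<noteq> xm v" using ordG(3)[OF xvG] by metis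
      show "(xm v, qs ! i) \<in> ord" using ordG(4)[OF xvG qG] ne nq by metis
    qed
    ultimately show ?thesis by blast
  qed
qed

lemma weak_map: assumes v: "v \<in> verts H" and w: "w \<in> wreach H oH v s"
  shows "\<exists>y \<in> Pm w. y \<in> wreach G ord (xm v) (2*r*s+2*r+s)"
proof -
  let ?t = "2*r*s+2*r+s"
  from w obtain ws where ws: "is_path H ws" "hd ws = v" "last ws = w" "length ws \<le> s+1" "(w,v) \<in> oH"
    and int: "\<forall>i. 0 < i \<and> i < length ws - 1 \<longrightarrow> (w, ws!i) \<in> oH \<and> ws!i \<noteq> w"
    unfolding wreach_def by blast
  have wH: "w \<in> verts H" using walk_setup(1)[OF v ws(1-4)] .
  obtain W where W: "lw G W" "hd W = xm v" "last W = xm w" "length W \<le> ?t+1" "set W \<subseteq> (\<Union>u\<in>set ws. Pm u)"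
    using walk_setup(2)[OF v ws(1-4)] by blast
  have wsH: "ws \<noteq> []" "set ws \<subseteq> verts H" using ws(1) unfolding is_path_def is_walk_def by simp_all
  have wv: "(xm w, xm v) \<in> ord" using monoH wH v ws(5) by blast
  have key: "(xm w, y) \<in> ord" if yin: "y \<in> set W" for y
  proof -
    obtain u where u: "u \<in> set ws" "y \<in> Pm u" using W(5) yin by blast
    have uH: "u \<in> verts H" using u wsH by blast
    have "(xm w, xm u) \<in> ord"
    proof -
      from u(1) wsH(1) show ?thesis
      proof (cases rule: pos_cases)
        case 1 then show ?thesis using wv ws(2) by simp
      next
        case 2 then show ?thesis using ordG(3) xm_G wH ws(3) by simp
      next
        case (3 i)
        then have "(w,u) \<in> oH" using int by blast
        then show "(xm w, xm u) \<in> ord" using monoH wH uH by blast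
      qed
    qed
    moreover have "(xm u, y) \<in> ord" using xm_min uH u by blast
    ultimately show ?thesis using ordG(1) unfolding trans_def by blast
  qed
  obtain ps where ps: "is_path G ps" "hd ps = xm v" "last ps = xm w" "length ps \<le> length W" "set ps \<subseteq> set W"
    using lw_path[OF W(1)] W(2,3) by auto
  have psG: "ps \<noteq> []" "distinct ps" using ps(1) unfolding is_path_def is_walk_def by simp_all
  have "xm w \<in> wreach G ord (xm v) ?t" unfolding wreach_def
  proof (intro CollectI exI[of _ ps] conjI allI impI)
    show "is_path G ps" "hd ps = xm v" "last ps = xm w" by (rule ps)+
    show "length ps \<le> ?t + 1" using ps(4) W(4) by simp
    show "(xm w, xm v) \<in> ord" by (rule wv)
    fix i assume i: "0 < i \<and> i < length ps - 1"
    then have "i < length ps" by linarith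
    then have "ps ! i \<in> set ps" by (rule nth_mem)
    then have "ps ! i \<in> set W" using ps(5) by blast
    then show "(xm w, ps ! i) \<in> ord" using key by blast
    show "ps ! i \<noteq> xm w"
    proof
      assume "ps ! i = xm w"
      then have eq: "ps ! i = ps ! (length ps - 1)" using ps(3) psG(1) by (simp add: last_conv_nth)
      have "i < length ps" "length ps - 1 < length ps" using i psG(1) by auto
      then have "i = length ps - 1" using nth_eq_iff_index_eq[OF psG(2)] eq by blast
      then show False using i by simp
    qed
  qed
  then show ?thesis using xm_in[OF wH] by blast
qed

end



theorem theorem18:
  fixes G :: "'a ugraph" and H :: "'b ugraph" and r l s :: nat
  assumes "graph G" and "graph H" and "l \<ge> 1"
    and "shallow_minor r H (strong_product_K G l)"
    and "s \<ge> 1"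
  shows "scol s H \<le> l * scol (2*r*s + 2*r + s) G \<and>
         wcol s H \<le> l * wcol (2*r*s + 2*r + s) G"
proof -
  let ?t = "2*r*s + 2*r + s"
  obtain mu where m1: "\<forall>v\<in>verts H. subgraph (mu v) (strong_product_K G l) \<and> connected_graph (mu v) \<and> radius_le (mu v) r"
    and m2: "\<forall>v\<in>verts H. \<forall>w\<in>verts H. v \<noteq> w \<longrightarrow> verts (mu v) \<inter> verts (mu w) = {}"
    and m3: "\<forall>v\<in>verts H. \<forall>w\<in>verts H. {v, w} \<in> edges H \<longrightarrow>
        (\<exists>x\<in>verts (mu v). \<exists>y\<in>verts (mu w). {x, y} \<in> edges (strong_product_K G l))"
    using assms(4) unfolding shallow_minor_def by blast
  have finG: "finite (verts G)" using assms(1) by (simp add: graph_def)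
  obtain hG :: "'a \<Rightarrow> nat" and nG where "hG ` verts G = {i. i<nG}" "inj_on hG (verts G)"
    using finite_imp_inj_to_nat_seg[OF finG] by blast
  then have linG: "linear_order_on (verts G) {(a,b). a \<in> verts G \<and> b \<in> verts G \<and> hG a \<le> hG b}"
    using lin_inj by blast
  have Mi: "mdl G H r l mu ord" if "linear_order_on (verts G) ord" for ord
    apply (rule mdl.intro)
    using assms(1) apply assumption
    using assms(2) apply assumption
    using m1 apply blast
    using m2 apply blast
    using m3 apply blast
    using that apply assumption
    done

  define Ps where "Ps k = (\<exists>ord. linear_order_on (verts G) ord \<and> (\<forall>v\<in>verts G. card (sreach G ord v ?t) \<le> k))" for k
  have "\<forall>v\<in>verts G. card (sreach G {(a,b). a \<in> verts G \<and> b \<in> verts G \<and> hG a \<le> hG b} v ?t) \<le> card (verts G)"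
    using card_mono[OF finG sreach_sub] by blast
  then have "Ps (card (verts G))" unfolding Ps_def using linG by blast
  then have "Ps (Least Ps)" by (rule LeastI)
  moreover have "Least Ps = scol ?t G" unfolding Ps_def scol_def by simp
  ultimately have "Ps (scol ?t G)" by simp
  then obtain ord1 where ord1: "linear_order_on (verts G) ord1" "\<forall>v\<in>verts G. card (sreach G ord1 v ?t) \<le> scol ?t G"
    unfolding Ps_def by blast
  interpret M1: mdl G H r l mu ord1 by (rule Mi[OF ord1(1)])
  obtain oH1 where oH1: "linear_order_on (verts H) oH1" "\<forall>u\<in>verts H. \<forall>w\<in>verts H. (u,w) \<in> oH1 \<longrightarrow> (M1.xm u, M1.xm w) \<in> ord1"
    using M1.ordH_exists by blast
  interpret N1: mdl2 G H r l mu ord1 oH1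
    by (rule mdl2.intro[OF M1.mdl_axioms]) (unfold mdl2_axioms_def, use oH1 in blast)
  have "\<forall>v\<in>verts H. card (sreach H oH1 v s) \<le> l * scol ?t G"
  proof
    fix v assume v: "v \<in> verts H"
    have "card (sreach H oH1 v s) \<le> l * card (sreach G ord1 (M1.xm v) ?t)"
    proof (rule M1.count)
      show "sreach H oH1 v s \<subseteq> verts H" by (rule sreach_sub)
      show "finite (sreach G ord1 (M1.xm v) ?t)" using sreach_sub finG by (rule finite_subset)
      show "\<forall>w\<in>sreach H oH1 v s. \<exists>y\<in>M1.Pm w. y \<in> sreach G ord1 (M1.xm v) ?t"
        using N1.strong_map[OF v] by blast
    qed
    also have "\<dots> \<le> l * scol ?t G" using ord1(2) M1.xm_G[OF v] by simp
    finally show "card (sreach H oH1 v s) \<le> l * scol ?t G" .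
  qed
  then have sc: "scol s H \<le> l * scol ?t G" unfolding scol_def using oH1(1) by (intro Least_le) blast

  define Pw where "Pw k = (\<exists>ord. linear_order_on (verts G) ord \<and> (\<forall>v\<in>verts G. card (wreach G ord v ?t) \<le> k))" for k
  have "\<forall>v\<in>verts G. card (wreach G {(a,b). a \<in> verts G \<and> b \<in> verts G \<and> hG a \<le> hG b} v ?t) \<le> card (verts G)"
    using card_mono[OF finG wreach_sub] by blast
  then have "Pw (card (verts G))" unfolding Pw_def using linG by blast
  then have "Pw (Least Pw)" by (rule LeastI)
  moreover have "Least Pw = wcol ?t G" unfolding Pw_def wcol_def by simp
  ultimately have "Pw (wcol ?t G)" by simp
  then obtain ord2 where ord2: "linear_order_on (verts G) ord2" "\<forall>v\<in>verts G. card (wreach G ord2 v ?t) \<le> wcol ?t G"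
    unfolding Pw_def by blast
  interpret M2: mdl G H r l mu ord2 by (rule Mi[OF ord2(1)])
  obtain oH2 where oH2: "linear_order_on (verts H) oH2" "\<forall>u\<in>verts H. \<forall>w\<in>verts H. (u,w) \<in> oH2 \<longrightarrow> (M2.xm u, M2.xm w) \<in> ord2"
    using M2.ordH_exists by blast
  interpret N2: mdl2 G H r l mu ord2 oH2
    by (rule mdl2.intro[OF M2.mdl_axioms]) (unfold mdl2_axioms_def, use oH2 in blast)
  have "\<forall>v\<in>verts H. card (wreach H oH2 v s) \<le> l * wcol ?t G"
  proof
    fix v assume v: "v \<in> verts H"
    have "card (wreach H oH2 v s) \<le> l * card (wreach G ord2 (M2.xm v) ?t)"
    proof (rule M2.count)
      show "wreach H oH2 v s \<subseteq> verts H" by (rule wreach_sub)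
      show "finite (wreach G ord2 (M2.xm v) ?t)" using wreach_sub finG by (rule finite_subset)
      show "\<forall>w\<in>wreach H oH2 v s. \<exists>y\<in>M2.Pm w. y \<in> wreach G ord2 (M2.xm v) ?t"
        using N2.weak_map[OF v] by blast
    qed
    also have "\<dots> \<le> l * wcol ?t G" using ord2(2) M2.xm_G[OF v] by simp
    finally show "card (wreach H oH2 v s) \<le> l * wcol ?t G" .
  qed
  then have wc: "wcol s H \<le> l * wcol ?t G" unfolding wcol_def using oH2(1) by (intro Least_le) blast
  show ?thesis using sc wc by simp
qed

end
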